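(* Let $\phi : D\to D'$ be a natural transformation between Dirichlet functors. Then $\phi$ is cartesian (i.e. for every function $g:X\to X'$ the naturality square with sides $\phi_{X'}:D(X')\to D'(X')$, $\phi_X:D(X)\to D'(X)$, $D(g)$, $D'(g)$ is a pullback in $\mathbf{Set}$) if and only if the square $D(1)\xrightarrow{\phi_1}D'(1)$ over $D(0)\xrightarrow{\phi_0}D'(0)$ (with vertical maps $D(!_0)$ and $D'(!_0)$) is a pullback. As a corollary, the equivalence $\mathbf{Dir}\simeq\mathbf{Set}^{\downarrow}$ given by evaluation at $!_0$ restricts to an equivalence $\mathbf{Dir}_{\ulcorner}\simeq\mathbf{Set}^{\downarrow}_{\ulcorner}$.
   Context: A Dirichlet functor is a functor $D:\mathbf{Set}^{op}\to\mathbf{Set}$ preserving connected limits; $\mathbf{Dir}$ is the category of Dirichlet functors and natural transformations, which is equivalent to $\mathbf{Set}^{\downarrow}$ (functions $E\to B$ and commuting squares) via $D\mapsto (D(!_0):D(1)\to D(0))$, where $!_0:0\to1$ is the unique map from the empty set. $\mathbf{Dir}_{\ulcorner}$ is the (wide) subcategory of Dirichlet functors and cartesian natural transformations; $\mathbf{Set}^{\downarrow}_{\ulcorner}$ is the subcategory of bundles and morphisms that are pullback squares. *)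

theory Defs
  imports "HOL-Library.FuncSet"
begin

(* The category Set is modelled by the sets of a fixed universe type: objects are
  sets X :: 'a set, morphisms X \<rightarrow> Y are extensional functions g \<in> X in the extensional function space X to Y,
  composition is compose, identities are restrict id X. *)

(* The terminal object 1 and the unique map from the initial object 0 = {} to 1. *)
definition one_set :: "'a set" where
  "one_set = {undefined}"

definition bang0 :: "'a \<Rightarrow> 'a" where
  "bang0 = (\<lambda>x. undefined)"

definition contra_functor ::
  "('a set \<Rightarrow> 'b set) \<Rightarrow> ('a set \<Rightarrow> 'a set \<Rightarrow> ('a \<Rightarrow> 'a) \<Rightarrow> 'b \<Rightarrow> 'b) \<Rightarrow> bool" where
  "contra_functor Dob Dar \<longleftrightarrow>
     (\<forall>X Y g. g \<in> X \<rightarrow>\<^sub>E Y \<longrightarrow> Dar X Y g \<in> Dob Y \<rightarrow>\<^sub>E Dob X) \<and>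
     (\<forall>X. Dar X X (restrict id X) = restrict id (Dob X)) \<and>
     (\<forall>X Y Z f g. f \<in> X \<rightarrow>\<^sub>E Y \<longrightarrow> g \<in> Y \<rightarrow>\<^sub>E Z \<longrightarrow>
        Dar X Z (compose X g f) = compose (Dob Z) (Dar X Y f) (Dar Y Z g))"

definition small_category ::
  "'k set \<Rightarrow> ('k \<Rightarrow> 'k \<Rightarrow> 'k set) \<Rightarrow> ('k \<Rightarrow> 'k) \<Rightarrow> ('k \<Rightarrow> 'k \<Rightarrow> 'k \<Rightarrow> 'k \<Rightarrow> 'k \<Rightarrow> 'k) \<Rightarrow> bool" where
  "small_category Ob Hom Idm Comp \<longleftrightarrow>
     (\<forall>i\<in>Ob. Idm i \<in> Hom i i) \<and>
     (\<forall>i\<in>Ob. \<forall>j\<in>Ob. \<forall>l\<in>Ob. \<forall>u\<in>Hom i j. \<forall>v\<in>Hom j l. Comp i j l v u \<in> Hom i l) \<and>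
     (\<forall>i\<in>Ob. \<forall>j\<in>Ob. \<forall>u\<in>Hom i j. Comp i j j (Idm j) u = u \<and> Comp i i j u (Idm i) = u) \<and>
     (\<forall>i\<in>Ob. \<forall>j\<in>Ob. \<forall>l\<in>Ob. \<forall>m\<in>Ob. \<forall>u\<in>Hom i j. \<forall>v\<in>Hom j l. \<forall>w\<in>Hom l m.
        Comp i l m w (Comp i j l v u) = Comp i j m (Comp j l m w v) u)"

definition connected_cat :: "'k set \<Rightarrow> ('k \<Rightarrow> 'k \<Rightarrow> 'k set) \<Rightarrow> bool" where
  "connected_cat Ob Hom \<longleftrightarrow> Ob \<noteq> {} \<and>
     (let R = {(i, j). i \<in> Ob \<and> j \<in> Ob \<and> Hom i j \<noteq> {}}
      in \<forall>i\<in>Ob. \<forall>j\<in>Ob. (i, j) \<in> (R \<union> R\<inverse>)\<^sup>*)"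

definition set_diagram ::
  "'k set \<Rightarrow> ('k \<Rightarrow> 'k \<Rightarrow> 'k set) \<Rightarrow> ('k \<Rightarrow> 'k) \<Rightarrow> ('k \<Rightarrow> 'k \<Rightarrow> 'k \<Rightarrow> 'k \<Rightarrow> 'k \<Rightarrow> 'k)
    \<Rightarrow> ('k \<Rightarrow> 'a set) \<Rightarrow> ('k \<Rightarrow> 'k \<Rightarrow> 'k \<Rightarrow> 'a \<Rightarrow> 'a) \<Rightarrow> bool" where
  "set_diagram Ob Hom Idm Comp Fob Fmor \<longleftrightarrow>
     (\<forall>i\<in>Ob. \<forall>j\<in>Ob. \<forall>u\<in>Hom i j. Fmor i j u \<in> Fob i \<rightarrow>\<^sub>E Fob j) \<and>
     (\<forall>i\<in>Ob. Fmor i i (Idm i) = restrict id (Fob i)) \<and>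
     (\<forall>i\<in>Ob. \<forall>j\<in>Ob. \<forall>l\<in>Ob. \<forall>u\<in>Hom i j. \<forall>v\<in>Hom j l.
        Fmor i l (Comp i j l v u) = compose (Fob i) (Fmor j l v) (Fmor i j u))"

definition cocone ::
  "'k set \<Rightarrow> ('k \<Rightarrow> 'k \<Rightarrow> 'k set) \<Rightarrow> ('k \<Rightarrow> 'a set) \<Rightarrow> ('k \<Rightarrow> 'k \<Rightarrow> 'k \<Rightarrow> 'a \<Rightarrow> 'a)
    \<Rightarrow> 'a set \<Rightarrow> ('k \<Rightarrow> 'a \<Rightarrow> 'a) \<Rightarrow> bool" where
  "cocone Ob Hom Fob Fmor L \<iota> \<longleftrightarrow>
     (\<forall>i\<in>Ob. \<iota> i \<in> Fob i \<rightarrow>\<^sub>E L) \<and>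
     (\<forall>i\<in>Ob. \<forall>j\<in>Ob. \<forall>u\<in>Hom i j. compose (Fob i) (\<iota> j) (Fmor i j u) = \<iota> i)"

definition colimit ::
  "'k set \<Rightarrow> ('k \<Rightarrow> 'k \<Rightarrow> 'k set) \<Rightarrow> ('k \<Rightarrow> 'a set) \<Rightarrow> ('k \<Rightarrow> 'k \<Rightarrow> 'k \<Rightarrow> 'a \<Rightarrow> 'a)
    \<Rightarrow> 'a set \<Rightarrow> ('k \<Rightarrow> 'a \<Rightarrow> 'a) \<Rightarrow> bool" where
  "colimit Ob Hom Fob Fmor L \<iota> \<longleftrightarrow>
     cocone Ob Hom Fob Fmor L \<iota> \<and>
     (\<forall>(Y :: 'a set) \<tau>. cocone Ob Hom Fob Fmor Y \<tau> \<longrightarrow>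
        (\<exists>!h. h \<in> L \<rightarrow>\<^sub>E Y \<and> (\<forall>i\<in>Ob. compose (Fob i) h (\<iota> i) = \<tau> i)))"

definition op_cone ::
  "'k set \<Rightarrow> ('k \<Rightarrow> 'k \<Rightarrow> 'k set) \<Rightarrow> ('k \<Rightarrow> 'b set) \<Rightarrow> ('k \<Rightarrow> 'k \<Rightarrow> 'k \<Rightarrow> 'b \<Rightarrow> 'b)
    \<Rightarrow> 'b set \<Rightarrow> ('k \<Rightarrow> 'b \<Rightarrow> 'b) \<Rightarrow> bool" where
  "op_cone Ob Hom Gob Gmor M \<pi> \<longleftrightarrow>
     (\<forall>i\<in>Ob. \<pi> i \<in> M \<rightarrow>\<^sub>E Gob i) \<and>
     (\<forall>i\<in>Ob. \<forall>j\<in>Ob. \<forall>u\<in>Hom i j. compose M (Gmor i j u) (\<pi> j) = \<pi> i)"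

definition op_limit ::
  "'k set \<Rightarrow> ('k \<Rightarrow> 'k \<Rightarrow> 'k set) \<Rightarrow> ('k \<Rightarrow> 'b set) \<Rightarrow> ('k \<Rightarrow> 'k \<Rightarrow> 'k \<Rightarrow> 'b \<Rightarrow> 'b)
    \<Rightarrow> 'b set \<Rightarrow> ('k \<Rightarrow> 'b \<Rightarrow> 'b) \<Rightarrow> bool" where
  "op_limit Ob Hom Gob Gmor M \<pi> \<longleftrightarrow>
     op_cone Ob Hom Gob Gmor M \<pi> \<and>
     (\<forall>(Z :: 'b set) \<sigma>. op_cone Ob Hom Gob Gmor Z \<sigma> \<longrightarrow>
        (\<exists>!h. h \<in> Z \<rightarrow>\<^sub>E M \<and> (\<forall>i\<in>Ob. compose Z (\<pi> i) h = \<sigma> i)))"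

(* Dirichlet functor: a functor Set^op \<rightarrow> Set preserving connected limits, i.e. sending
  colimits in Set of small connected diagrams to limits in Set. *)
definition dirichlet ::
  "('a set \<Rightarrow> 'b set) \<Rightarrow> ('a set \<Rightarrow> 'a set \<Rightarrow> ('a \<Rightarrow> 'a) \<Rightarrow> 'b \<Rightarrow> 'b) \<Rightarrow> bool" where
  "dirichlet Dob Dar \<longleftrightarrow>
     contra_functor Dob Dar \<and>
     (\<forall>(Ob :: 'a set set) Hom Idm Comp Fob Fmor L \<iota>.
        small_category Ob Hom Idm Comp \<and> connected_cat Ob Hom \<and>
        set_diagram Ob Hom Idm Comp Fob Fmor \<and> colimit Ob Hom Fob Fmor L \<iota> \<longrightarrow>
        op_limit Ob Hom (\<lambda>i. Dob (Fob i)) (\<lambda>i j u. Dar (Fob i) (Fob j) (Fmor i j u))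
          (Dob L) (\<lambda>i. Dar (Fob i) L (\<iota> i)))"

definition nat_trans ::
  "('a set \<Rightarrow> 'b set) \<Rightarrow> ('a set \<Rightarrow> 'a set \<Rightarrow> ('a \<Rightarrow> 'a) \<Rightarrow> 'b \<Rightarrow> 'b) \<Rightarrow>
   ('a set \<Rightarrow> 'b set) \<Rightarrow> ('a set \<Rightarrow> 'a set \<Rightarrow> ('a \<Rightarrow> 'a) \<Rightarrow> 'b \<Rightarrow> 'b) \<Rightarrow>
   ('a set \<Rightarrow> 'b \<Rightarrow> 'b) \<Rightarrow> bool" where
  "nat_trans Dob Dar Dob' Dar' \<phi> \<longleftrightarrow>
     (\<forall>X. \<phi> X \<in> Dob X \<rightarrow> Dob' X) \<and>
     (\<forall>X Y g. g \<in> X \<rightarrow>\<^sub>E Y \<longrightarrow> (\<forall>y\<in>Dob Y. \<phi> X (Dar X Y g y) = Dar' X Y g (\<phi> Y y)))"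

definition is_pullback ::
  "'b set \<Rightarrow> 'b set \<Rightarrow> 'b set \<Rightarrow> 'b set \<Rightarrow> ('b \<Rightarrow> 'b) \<Rightarrow> ('b \<Rightarrow> 'b) \<Rightarrow> ('b \<Rightarrow> 'b) \<Rightarrow> ('b \<Rightarrow> 'b) \<Rightarrow> bool" where
  "is_pullback A B C P f p q h \<longleftrightarrow>
     f \<in> A \<rightarrow> B \<and> p \<in> A \<rightarrow> C \<and> q \<in> B \<rightarrow> P \<and> h \<in> C \<rightarrow> P \<and>
     (\<forall>a\<in>A. q (f a) = h (p a)) \<and>
     (\<forall>(T :: 'b set) s t. s \<in> T \<rightarrow> B \<longrightarrow> t \<in> T \<rightarrow> C \<longrightarrow> (\<forall>x\<in>T. q (s x) = h (t x)) \<longrightarrow>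
        (\<exists>!u. u \<in> T \<rightarrow>\<^sub>E A \<and> (\<forall>x\<in>T. f (u x) = s x \<and> p (u x) = t x)))"

definition cartesian ::
  "('a set \<Rightarrow> 'b set) \<Rightarrow> ('a set \<Rightarrow> 'a set \<Rightarrow> ('a \<Rightarrow> 'a) \<Rightarrow> 'b \<Rightarrow> 'b) \<Rightarrow>
   ('a set \<Rightarrow> 'b set) \<Rightarrow> ('a set \<Rightarrow> 'a set \<Rightarrow> ('a \<Rightarrow> 'a) \<Rightarrow> 'b \<Rightarrow> 'b) \<Rightarrow>
   ('a set \<Rightarrow> 'b \<Rightarrow> 'b) \<Rightarrow> bool" where
  "cartesian Dob Dar Dob' Dar' \<phi> \<longleftrightarrow>
     (\<forall>X X' g. g \<in> X \<rightarrow>\<^sub>E X' \<longrightarrow>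
        is_pullback (Dob X') (Dob' X') (Dob X) (Dob' X) (\<phi> X') (Dar X X' g) (Dar' X X' g) (\<phi> X))"

end

theory Submission
  imports Defs
begin

lemma restrict_empty_bang0: "restrict f {} = bang0"
  by (simp add: bang0_def restrict_def)

lemma PiE_empty_bang0: "f \<in> {} \<rightarrow>\<^sub>E Y \<Longrightarrow> f = bang0"
  by (auto simp: bang0_def PiE_def extensional_def)

lemma bang0_PiE: "bang0 \<in> {} \<rightarrow>\<^sub>E Y"
  by (simp add: bang0_def PiE_def extensional_def)

lemma compose_empty: "compose {} g f = bang0"
  by (simp add: compose_def restrict_empty_bang0)

definition pt :: "'a \<Rightarrow> 'a \<Rightarrow> 'a" where
  "pt x = restrict (\<lambda>_. x) one_set"

lemma pt_PiE: "x \<in> X \<Longrightarrow> pt x \<in> one_set \<rightarrow>\<^sub>E X"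
  by (simp add: pt_def)

lemma compose_pt: "x \<in> X \<Longrightarrow> compose one_set g (pt x) = pt (g x)"
  by (auto simp: compose_def pt_def one_set_def)

lemma pb_iff:
  "is_pullback A B C P f p q h \<longleftrightarrow>
   (f \<in> A \<rightarrow> B \<and> p \<in> A \<rightarrow> C \<and> q \<in> B \<rightarrow> P \<and> h \<in> C \<rightarrow> P \<and> (\<forall>a\<in>A. q (f a) = h (p a)) \<and>
    (\<forall>b\<in>B. \<forall>c\<in>C. q b = h c \<longrightarrow> (\<exists>!a. a \<in> A \<and> f a = b \<and> p a = c)))"
proof
  assume H: "is_pullback A B C P f p q h"
  have U0: "\<forall>(T :: 'a set) s t. s \<in> T \<rightarrow> B \<longrightarrow> t \<in> T \<rightarrow> C \<longrightarrow> (\<forall>x\<in>T. q (s x) = h (t x)) \<longrightarrow>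
        (\<exists>!u. u \<in> T \<rightarrow>\<^sub>E A \<and> (\<forall>x\<in>T. f (u x) = s x \<and> p (u x) = t x))"
    using H unfolding is_pullback_def by (elim conjE) assumption
  note U = U0[rule_format]
  have "\<exists>!a. a \<in> A \<and> f a = b \<and> p a = c" if b: "b \<in> B" and c: "c \<in> C" and e: "q b = h c" for b c
  proof -
    have s1: "(\<lambda>_. b) \<in> {b} \<rightarrow> B" using b by simp
    have t1: "(\<lambda>_. c) \<in> {b} \<rightarrow> C" using c by simp
    have e1: "\<And>x. x \<in> {b} \<Longrightarrow> q ((\<lambda>_. b) x) = h ((\<lambda>_. c) x)" using e by simp
    have EX: "\<exists>!u. u \<in> {b} \<rightarrow>\<^sub>E A \<and> (\<forall>x\<in>{b}. f (u x) = b \<and> p (u x) = c)"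
      using U[OF s1 t1 e1] by simp
    then obtain u where u0: "u \<in> {b} \<rightarrow>\<^sub>E A \<and> (\<forall>x\<in>{b}. f (u x) = b \<and> p (u x) = c)"
      and uu: "\<And>u'. u' \<in> {b} \<rightarrow>\<^sub>E A \<and> (\<forall>x\<in>{b}. f (u' x) = b \<and> p (u' x) = c) \<Longrightarrow> u' = u"
      by (elim ex1E) blast
    have u: "u \<in> {b} \<rightarrow>\<^sub>E A" "f (u b) = b" "p (u b) = c" using u0 by auto
    show ?thesis
    proof (rule ex1I[of _ "u b"])
      show "u b \<in> A \<and> f (u b) = b \<and> p (u b) = c" using u by auto
      fix a assume a: "a \<in> A \<and> f a = b \<and> p a = c"
      have "restrict (\<lambda>_. a) {b} = u" by (rule uu) (use a in simp)
      then show "a = u b" by (metis restrict_apply' singletonI)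
    qed
  qed
  moreover have "f \<in> A \<rightarrow> B \<and> p \<in> A \<rightarrow> C \<and> q \<in> B \<rightarrow> P \<and> h \<in> C \<rightarrow> P \<and> (\<forall>a\<in>A. q (f a) = h (p a))"
    using H unfolding is_pullback_def by (elim conjE) (intro conjI)
  ultimately show "f \<in> A \<rightarrow> B \<and> p \<in> A \<rightarrow> C \<and> q \<in> B \<rightarrow> P \<and> h \<in> C \<rightarrow> P \<and> (\<forall>a\<in>A. q (f a) = h (p a)) \<and>
    (\<forall>b\<in>B. \<forall>c\<in>C. q b = h c \<longrightarrow> (\<exists>!a. a \<in> A \<and> f a = b \<and> p a = c))"
    by simp
next
  assume H: "f \<in> A \<rightarrow> B \<and> p \<in> A \<rightarrow> C \<and> q \<in> B \<rightarrow> P \<and> h \<in> C \<rightarrow> P \<and> (\<forall>a\<in>A. q (f a) = h (p a)) \<and>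
    (\<forall>b\<in>B. \<forall>c\<in>C. q b = h c \<longrightarrow> (\<exists>!a. a \<in> A \<and> f a = b \<and> p a = c))"
  have X1: "\<exists>!u. u \<in> T \<rightarrow>\<^sub>E A \<and> (\<forall>x\<in>T. f (u x) = s x \<and> p (u x) = t x)"
    if s: "s \<in> T \<rightarrow> B" and t: "t \<in> T \<rightarrow> C" and e: "\<forall>x\<in>T. q (s x) = h (t x)" for T s t
  proof -
    have E0: "\<forall>b\<in>B. \<forall>c\<in>C. q b = h c \<longrightarrow> (\<exists>!a. a \<in> A \<and> f a = b \<and> p a = c)"
      using H by (elim conjE)
    have E: "\<exists>!a. a \<in> A \<and> f a = s x \<and> p a = t x" if x: "x \<in> T" for x
    proof -
      have "s x \<in> B" "t x \<in> C" "q (s x) = h (t x)" using s t e x by auto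
      then show ?thesis using E0 by blast
    qed
    define u where "u = restrict (\<lambda>x. THE a. a \<in> A \<and> f a = s x \<and> p a = t x) T"
    have uP: "u x \<in> A \<and> f (u x) = s x \<and> p (u x) = t x" if x: "x \<in> T" for x
      using theI'[OF E[OF x]] x by (simp add: u_def)
    show ?thesis
    proof (rule ex1I[of _ u])
      show "u \<in> T \<rightarrow>\<^sub>E A \<and> (\<forall>x\<in>T. f (u x) = s x \<and> p (u x) = t x)"
        using uP by (auto simp: u_def)
      fix u' assume u': "u' \<in> T \<rightarrow>\<^sub>E A \<and> (\<forall>x\<in>T. f (u' x) = s x \<and> p (u' x) = t x)"
      show "u' = u"
      proof (rule extensionalityI[of _ T])
        show "u' \<in> extensional T" using u' by (auto simp: PiE_def)
        show "u \<in> extensional T" by (simp add: u_def)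
        fix x assume x: "x \<in> T"
        show "u' x = u x" using E[OF x] uP[OF x] u' x by blast
      qed
    qed
  qed
  have X2: "f \<in> A \<rightarrow> B" "p \<in> A \<rightarrow> C" "q \<in> B \<rightarrow> P" "h \<in> C \<rightarrow> P" "\<forall>a\<in>A. q (f a) = h (p a)"
  proof -
    have H5: "f \<in> A \<rightarrow> B \<and> p \<in> A \<rightarrow> C \<and> q \<in> B \<rightarrow> P \<and> h \<in> C \<rightarrow> P \<and> (\<forall>a\<in>A. q (f a) = h (p a))"
      using H by (elim conjE) (intro conjI)
    then show "f \<in> A \<rightarrow> B" "p \<in> A \<rightarrow> C" "q \<in> B \<rightarrow> P" "h \<in> C \<rightarrow> P" "\<forall>a\<in>A. q (f a) = h (p a)"
      by simp_all
  qed
  show "is_pullback A B C P f p q h" unfolding is_pullback_def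
  proof (intro conjI allI impI)
    show "f \<in> A \<rightarrow> B" "p \<in> A \<rightarrow> C" "q \<in> B \<rightarrow> P" "h \<in> C \<rightarrow> P" "\<forall>a\<in>A. q (f a) = h (p a)"
      by (rule X2)+
    fix T :: "'a set" and s t
    assume "s \<in> T \<rightarrow> B" "t \<in> T \<rightarrow> C" "\<forall>x\<in>T. q (s x) = h (t x)"
    then show "\<exists>!u. u \<in> T \<rightarrow>\<^sub>E A \<and> (\<forall>x\<in>T. f (u x) = s x \<and> p (u x) = t x)"
      by (rule X1)
  qed
qed


lemma limit_mono:
  assumes L: "op_limit Ob Hom Gob Gmor M \<pi>" and w: "w1 \<in> M" "w2 \<in> M"
    and eq: "\<forall>i\<in>Ob. \<pi> i w1 = \<pi> i w2"
  shows "w1 = w2"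
proof -
  have cone: "\<forall>i\<in>Ob. \<pi> i \<in> M \<rightarrow>\<^sub>E Gob i"
    "\<forall>i\<in>Ob. \<forall>j\<in>Ob. \<forall>u\<in>Hom i j. compose M (Gmor i j u) (\<pi> j) = \<pi> i"
    using L unfolding op_limit_def op_cone_def by auto
  have GC: "Gmor i j u (\<pi> j w1) = \<pi> i w1" if "i \<in> Ob" "j \<in> Ob" "u \<in> Hom i j" for i j u
    using cone(2) that w(1) by (metis compose_eq)
  define \<sigma> where "\<sigma> = (\<lambda>i. restrict (\<lambda>_. \<pi> i w1) {w1})"
  have oc: "op_cone Ob Hom Gob Gmor {w1} \<sigma>"
    unfolding op_cone_def \<sigma>_def
  proof (intro conjI ballI)
    fix i assume "i \<in> Ob"
    then show "restrict (\<lambda>_. \<pi> i w1) {w1} \<in> {w1} \<rightarrow>\<^sub>E Gob i" using cone(1) w(1) by auto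
  next
    fix i j u assume "i \<in> Ob" "j \<in> Ob" "u \<in> Hom i j"
    then show "compose {w1} (Gmor i j u) (restrict (\<lambda>_. \<pi> j w1) {w1}) = restrict (\<lambda>_. \<pi> i w1) {w1}"
      using GC by (auto simp: compose_def)
  qed
  then have U: "\<exists>!h. h \<in> {w1} \<rightarrow>\<^sub>E M \<and> (\<forall>i\<in>Ob. compose {w1} (\<pi> i) h = \<sigma> i)"
    using L unfolding op_limit_def by blast
  have h1: "restrict (\<lambda>_. w1) {w1} \<in> {w1} \<rightarrow>\<^sub>E M \<and> (\<forall>i\<in>Ob. compose {w1} (\<pi> i) (restrict (\<lambda>_. w1) {w1}) = \<sigma> i)"
    using w by (auto simp: compose_def \<sigma>_def)
  have h2: "restrict (\<lambda>_. w2) {w1} \<in> {w1} \<rightarrow>\<^sub>E M \<and> (\<forall>i\<in>Ob. compose {w1} (\<pi> i) (restrict (\<lambda>_. w2) {w1}) = \<sigma> i)"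
    using w eq by (auto simp: compose_def \<sigma>_def)
  have "restrict (\<lambda>_. w1) {w1} = restrict (\<lambda>_. w2) {w1}" using U h1 h2 by blast
  then show ?thesis by (metis restrict_apply' singletonI)
qed

lemma limit_ex:
  assumes L: "op_limit Ob Hom Gob Gmor M \<pi>"
    and e: "\<forall>i\<in>Ob. e i \<in> Gob i"
    and ec: "\<forall>i\<in>Ob. \<forall>j\<in>Ob. \<forall>u\<in>Hom i j. Gmor i j u (e j) = e i"
  shows "\<exists>w\<in>M. \<forall>i\<in>Ob. \<pi> i w = e i"
proof -
  define z :: 'b where "z = undefined"
  define \<sigma> where "\<sigma> = (\<lambda>i. restrict (\<lambda>_. e i) {z})"
  have oc: "op_cone Ob Hom Gob Gmor {z} \<sigma>"
    unfolding op_cone_def \<sigma>_def using e ec by (auto simp: compose_def)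
  then obtain h where h: "h \<in> {z} \<rightarrow>\<^sub>E M" "\<forall>i\<in>Ob. compose {z} (\<pi> i) h = \<sigma> i"
    using L unfolding op_limit_def by blast
  have "\<pi> i (h z) = e i" if "i \<in> Ob" for i
  proof -
    have "compose {z} (\<pi> i) h z = \<sigma> i z" using h that by simp
    then show ?thesis by (simp add: compose_def \<sigma>_def)
  qed
  moreover have "h z \<in> M" using h by auto
  ultimately show ?thesis by blast
qed


definition Obs :: "'a set \<Rightarrow> 'a set set" where
  "Obs X = insert {} ((\<lambda>x. {x}) ` X)"
definition Homs :: "'a set \<Rightarrow> 'a set \<Rightarrow> 'a set set" where
  "Homs i j = (if i = j \<or> i = {} then {{}} else {})"
definition Idms :: "'a set \<Rightarrow> 'a set" where
  "Idms i = {}"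
definition Comps :: "'a set \<Rightarrow> 'a set \<Rightarrow> 'a set \<Rightarrow> 'a set \<Rightarrow> 'a set \<Rightarrow> 'a set" where
  "Comps i j l v u = {}"
definition Fobs :: "'a set \<Rightarrow> 'a set" where
  "Fobs i = (if i = {} then {} else one_set)"
definition Fmors :: "'a set \<Rightarrow> 'a set \<Rightarrow> 'a set \<Rightarrow> 'a \<Rightarrow> 'a" where
  "Fmors i j u = (if i = j then restrict id (Fobs i) else bang0)"
definition iota :: "'a set \<Rightarrow> 'a \<Rightarrow> 'a" where
  "iota i = (if i = {} then bang0 else pt (the_elem i))"

lemma cat_Obs: "small_category (Obs X) Homs Idms Comps"
  unfolding small_category_def Homs_def Idms_def Comps_def by auto

lemma conn_Obs: "connected_cat (Obs X) Homs"
proof -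
  define R where "R = {(i, j). i \<in> Obs X \<and> j \<in> Obs X \<and> Homs i j \<noteq> {}}"
  have "(i, j) \<in> (R \<union> R\<inverse>)\<^sup>*" if "i \<in> Obs X" "j \<in> Obs X" for i j
  proof -
    have "({}, i) \<in> R" "({}, j) \<in> R" using that by (auto simp: R_def Obs_def Homs_def)
    then have "(i, {}) \<in> (R \<union> R\<inverse>)\<^sup>*" "({}, j) \<in> (R \<union> R\<inverse>)\<^sup>*" by auto
    then show ?thesis by (meson rtrancl_trans)
  qed
  then show ?thesis unfolding connected_cat_def Let_def R_def[symmetric]
    by (auto simp: Obs_def)
qed

lemma diag_Obs: "set_diagram (Obs X) Homs Idms Comps Fobs Fmors"
  unfolding set_diagram_def
proof (intro conjI ballI)
  fix i j u assume "i \<in> Obs X" "j \<in> Obs X" "u \<in> Homs i j"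
  then show "Fmors i j u \<in> Fobs i \<rightarrow>\<^sub>E Fobs j"
  proof (cases "i = j")
    case False
    then have "i = {}" using \<open>u \<in> Homs i j\<close> by (auto simp: Homs_def split: if_splits)
    then have "Fmors i j u = bang0" "Fobs i = {}" using False by (simp_all add: Fmors_def Fobs_def)
    then show ?thesis by (metis bang0_PiE)
  qed (auto simp: Fmors_def bang0_def)
next
  fix i assume "i \<in> Obs X" then show "Fmors i i (Idms i) = restrict id (Fobs i)"
    by (simp add: Fmors_def)
next
  fix i j l u v assume A: "i \<in> Obs X" "j \<in> Obs X" "l \<in> Obs X" "u \<in> Homs i j" "v \<in> Homs j l"
  show "Fmors i l (Comps i j l v u) = compose (Fobs i) (Fmors j l v) (Fmors i j u)"
  proof (cases "i = {}")
    case True then show ?thesis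
      by (simp add: Fmors_def Fobs_def compose_empty restrict_empty_bang0)
  next
    case False
    then have "i = j" "j = l" using A(4,5) by (auto simp: Homs_def split: if_splits)
    then show ?thesis by (auto simp: Fmors_def compose_def Fobs_def)
  qed
qed

lemma colim_Obs: "colimit (Obs X) Homs Fobs Fmors X iota"
proof -
  have cc: "cocone (Obs X) Homs Fobs Fmors Y \<tau> \<longleftrightarrow>
     (\<forall>i\<in>Obs X. \<tau> i \<in> Fobs i \<rightarrow>\<^sub>E Y)" for Y \<tau>
  proof -
    have "compose (Fobs i) (\<tau> j) (Fmors i j u) = \<tau> i"
      if "\<forall>i\<in>Obs X. \<tau> i \<in> Fobs i \<rightarrow>\<^sub>E Y" "i \<in> Obs X" "j \<in> Obs X" "u \<in> Homs i j" for i j u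
    proof (cases "i = {}")
      case True
      have "\<tau> i \<in> Fobs i \<rightarrow>\<^sub>E Y" using that(1,2) by blast
      then have "\<tau> i \<in> {} \<rightarrow>\<^sub>E Y" using True by (simp only: Fobs_def if_True simp_thms)
      then have t0: "\<tau> i = bang0" using True by (metis PiE_empty_bang0)
      have "compose (Fobs i) (\<tau> j) (Fmors i j u) = bang0" using True by (simp add: Fobs_def compose_empty)
      then show ?thesis by (simp only: t0)
    next
      case False
      then have "i = j" using that by (auto simp: Homs_def split: if_splits)
      moreover have "\<tau> i \<in> Fobs i \<rightarrow>\<^sub>E Y" using that(1,2) by blast
      ultimately show ?thesis
        by (auto simp: Fmors_def compose_def PiE_def intro!: extensionalityI[of _ "Fobs i"])
    qed
    then show ?thesis unfolding cocone_def by blast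
  qed
  have c0: "cocone (Obs X) Homs Fobs Fmors X iota"
    unfolding cc by (auto simp: Obs_def Fobs_def iota_def bang0_PiE pt_PiE bang0_def)
  have "\<exists>!h. h \<in> X \<rightarrow>\<^sub>E Y \<and> (\<forall>i\<in>Obs X. compose (Fobs i) h (iota i) = \<tau> i)"
    if c: "cocone (Obs X) Homs Fobs Fmors Y \<tau>" for Y \<tau>
  proof -
    have t: "\<forall>i\<in>Obs X. \<tau> i \<in> Fobs i \<rightarrow>\<^sub>E Y" using c cc by blast
    have t1: "\<tau> {x} \<in> one_set \<rightarrow>\<^sub>E Y" if "x \<in> X" for x
      using t that by (auto simp: Obs_def Fobs_def)
    have t0: "\<tau> {} = bang0" using t by (auto simp: Obs_def Fobs_def intro: PiE_empty_bang0)
    define h where "h = restrict (\<lambda>x. \<tau> {x} undefined) X"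
    have key: "compose (Fobs i) k (iota i) = \<tau> i \<longleftrightarrow> k (the_elem i) = \<tau> i undefined"
      if io: "i \<in> Obs X" "i \<noteq> {}" for i k
    proof -
      obtain x where x: "i = {x}" "x \<in> X" using io by (auto simp: Obs_def)
      have "compose one_set k (pt x) = \<tau> {x} \<longleftrightarrow> k x = \<tau> {x} undefined"
      proof
        assume "compose one_set k (pt x) = \<tau> {x}"
        then have "compose one_set k (pt x) undefined = \<tau> {x} undefined" by simp
        then show "k x = \<tau> {x} undefined" by (simp add: compose_def pt_def one_set_def)
      next
        assume "k x = \<tau> {x} undefined"
        then show "compose one_set k (pt x) = \<tau> {x}"
          using t1[OF x(2)]
          by (auto simp: compose_def pt_def one_set_def PiE_def intro!: extensionalityI[of _ one_set])
      qed
      then show ?thesis using x by (simp add: Fobs_def iota_def one_set_def)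
    qed
    have k0: "compose (Fobs {}) k (iota {}) = \<tau> {}" for k
      by (simp add: Fobs_def t0 compose_empty)
    show ?thesis
    proof (rule ex1I[of _ h])
      show "h \<in> X \<rightarrow>\<^sub>E Y \<and> (\<forall>i\<in>Obs X. compose (Fobs i) h (iota i) = \<tau> i)"
      proof (intro conjI ballI)
        show "h \<in> X \<rightarrow>\<^sub>E Y" using t1 by (auto simp: h_def one_set_def)
        fix i assume i: "i \<in> Obs X"
        show "compose (Fobs i) h (iota i) = \<tau> i"
        proof (cases "i = {}")
          case True then show ?thesis using k0 by simp
        next
          case False
          then obtain x where "i = {x}" "x \<in> X" using i by (auto simp: Obs_def)
          then show ?thesis using key[OF i False] by (simp add: h_def)
        qed
      qed
    next
      fix k assume k: "k \<in> X \<rightarrow>\<^sub>E Y \<and> (\<forall>i\<in>Obs X. compose (Fobs i) k (iota i) = \<tau> i)"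
      show "k = h"
      proof (rule extensionalityI[of _ X])
        show "k \<in> extensional X" using k by (auto simp: PiE_def)
        show "h \<in> extensional X" by (simp add: h_def)
        fix x assume x: "x \<in> X"
        then have "{x} \<in> Obs X" by (simp add: Obs_def)
        then have "k x = \<tau> {x} undefined" using key[of "{x}" k] k by auto
        then show "k x = h x" using x by (simp add: h_def)
      qed
    qed
  qed
  then show ?thesis using c0 unfolding colimit_def by blast
qed


lemma dir_lim:
  assumes "dirichlet Dob Dar"
  shows "op_limit (Obs X) Homs (\<lambda>i. Dob (Fobs i)) (\<lambda>i j u. Dar (Fobs i) (Fobs j) (Fmors i j u))
           (Dob X) (\<lambda>i. Dar (Fobs i) X (iota i))"
  using assms cat_Obs[of X] conn_Obs[of X] diag_Obs[of X] colim_Obs[of X]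
  unfolding dirichlet_def by blast

lemma dir_mono:
  assumes D: "dirichlet Dob Dar" and w: "w1 \<in> Dob X" "w2 \<in> Dob X"
    and e1: "\<forall>x\<in>X. Dar one_set X (pt x) w1 = Dar one_set X (pt x) w2"
    and e0: "Dar {} X bang0 w1 = Dar {} X bang0 w2"
  shows "w1 = w2"
proof (rule limit_mono[OF dir_lim[OF D, of X] w])
  show "\<forall>i\<in>Obs X. Dar (Fobs i) X (iota i) w1 = Dar (Fobs i) X (iota i) w2"
    using e1 e0 by (auto simp: Obs_def Fobs_def iota_def)
qed

lemma dir_ex:
  assumes D: "dirichlet Dob Dar" and c: "c \<in> Dob {}"
    and a: "\<forall>x\<in>X. a x \<in> Dob one_set \<and> Dar {} one_set bang0 (a x) = c"
  shows "\<exists>w\<in>Dob X. (\<forall>x\<in>X. Dar one_set X (pt x) w = a x) \<and> Dar {} X bang0 w = c"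
proof -
  have F: "contra_functor Dob Dar" using D by (simp add: dirichlet_def)
  define e where "e i = (if i = {} then c else a (the_elem i))" for i
  have e1: "\<forall>i\<in>Obs X. e i \<in> Dob (Fobs i)"
    using a c by (auto simp: Obs_def Fobs_def e_def)
  have e2: "\<forall>i\<in>Obs X. \<forall>j\<in>Obs X. \<forall>u\<in>Homs i j. Dar (Fobs i) (Fobs j) (Fmors i j u) (e j) = e i"
  proof (intro ballI)
    fix i j u assume i: "i \<in> Obs X" and j: "j \<in> Obs X" and u: "u \<in> Homs i j"
    show "Dar (Fobs i) (Fobs j) (Fmors i j u) (e j) = e i"
    proof (cases "i = j")
      case True
      have "Dar (Fobs i) (Fobs i) (restrict id (Fobs i)) = restrict id (Dob (Fobs i))"
        using F by (simp add: contra_functor_def)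
      then show ?thesis using True e1 i by (simp add: Fmors_def)
    next
      case False
      then have i0: "i = {}" using u by (auto simp: Homs_def split: if_splits)
      then obtain x where x: "j = {x}" "x \<in> X" using j False by (auto simp: Obs_def)
      show ?thesis using i0 x False a by (simp add: Fmors_def Fobs_def e_def)
    qed
  qed
  obtain w where w: "w \<in> Dob X" "\<forall>i\<in>Obs X. Dar (Fobs i) X (iota i) w = e i"
    using limit_ex[OF dir_lim[OF D, of X] e1 e2] by blast
  have "Dar one_set X (pt x) w = a x" if "x \<in> X" for x
    using w(2) that by (force simp: Obs_def Fobs_def iota_def e_def)
  moreover have "Dar {} X bang0 w = c"
    using w(2) by (force simp: Obs_def Fobs_def iota_def e_def)
  ultimately show ?thesis using w(1) by blast
qed


lemma dar_in: "contra_functor Dob Dar \<Longrightarrow> g \<in> X \<rightarrow>\<^sub>E Y \<Longrightarrow> w \<in> Dob Y \<Longrightarrow> Dar X Y g w \<in> Dob X"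
proof -
  assume F: "contra_functor Dob Dar" and g: "g \<in> X \<rightarrow>\<^sub>E Y" and w: "w \<in> Dob Y"
  have "\<forall>X Y g. g \<in> X \<rightarrow>\<^sub>E Y \<longrightarrow> Dar X Y g \<in> Dob Y \<rightarrow>\<^sub>E Dob X"
    using F unfolding contra_functor_def by (elim conjE)
  then have "Dar X Y g \<in> Dob Y \<rightarrow>\<^sub>E Dob X" using g by blast
  then show ?thesis using w by auto
qed

lemma dar_comp:
  assumes "contra_functor Dob Dar" "f \<in> X \<rightarrow>\<^sub>E Y" "g \<in> Y \<rightarrow>\<^sub>E Z" "w \<in> Dob Z"
  shows "Dar X Z (compose X g f) w = Dar X Y f (Dar Y Z g w)"
proof -
  have "Dar X Z (compose X g f) = compose (Dob Z) (Dar X Y f) (Dar Y Z g)"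
    using assms(1-3) unfolding contra_functor_def by blast
  then show ?thesis using assms(4) by (simp add: compose_eq)
qed

lemma dar_bang_pt:
  assumes "contra_functor Dob Dar" "x \<in> X" "w \<in> Dob X"
  shows "Dar {} one_set bang0 (Dar one_set X (pt x) w) = Dar {} X bang0 w"
  using dar_comp[OF assms(1) bang0_PiE pt_PiE[OF assms(2)] assms(3)] by (simp add: compose_empty)

lemma dar_bang_g:
  assumes "contra_functor Dob Dar" "g \<in> X \<rightarrow>\<^sub>E X'" "w \<in> Dob X'"
  shows "Dar {} X bang0 (Dar X X' g w) = Dar {} X' bang0 w"
  using dar_comp[OF assms(1) bang0_PiE assms(2) assms(3)] by (simp add: compose_empty)

lemma dar_pt_g:
  assumes "contra_functor Dob Dar" "g \<in> X \<rightarrow>\<^sub>E X'" "w \<in> Dob X'" "x \<in> X"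
  shows "Dar one_set X (pt x) (Dar X X' g w) = Dar one_set X' (pt (g x)) w"
  using dar_comp[OF assms(1) pt_PiE[OF assms(4)] assms(2) assms(3)] assms(4) by (simp add: compose_pt)

lemma nat_in: assumes "nat_trans Dob Dar Dob' Dar' \<phi>" "w \<in> Dob X" shows "\<phi> X w \<in> Dob' X"
proof -
  have "\<forall>X. \<phi> X \<in> Dob X \<rightarrow> Dob' X" using assms(1) unfolding nat_trans_def by (elim conjE)
  then have "\<phi> X \<in> Dob X \<rightarrow> Dob' X" by (rule spec)
  then show ?thesis using assms(2) by (rule funcset_mem)
qed

lemma nat_eq: "nat_trans Dob Dar Dob' Dar' \<phi> \<Longrightarrow> g \<in> X \<rightarrow>\<^sub>E Y \<Longrightarrow> y \<in> Dob Y \<Longrightarrow>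
   \<phi> X (Dar X Y g y) = Dar' X Y g (\<phi> Y y)"
proof -
  assume N: "nat_trans Dob Dar Dob' Dar' \<phi>" and g: "g \<in> X \<rightarrow>\<^sub>E Y" and y: "y \<in> Dob Y"
  have "\<forall>X Y g. g \<in> X \<rightarrow>\<^sub>E Y \<longrightarrow> (\<forall>y\<in>Dob Y. \<phi> X (Dar X Y g y) = Dar' X Y g (\<phi> Y y))"
    using N unfolding nat_trans_def by (elim conjE)
  then show ?thesis using g y by (elim allE impE ballE) auto
qed

theorem proposition3p1:
  fixes Dob Dob' :: "'a set \<Rightarrow> 'b set"
    and Dar Dar' :: "'a set \<Rightarrow> 'a set \<Rightarrow> ('a \<Rightarrow> 'a) \<Rightarrow> 'b \<Rightarrow> 'b"
    and \<phi> :: "'a set \<Rightarrow> 'b \<Rightarrow> 'b"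
  assumes "dirichlet Dob Dar" and "dirichlet Dob' Dar'"
    and "nat_trans Dob Dar Dob' Dar' \<phi>"
  shows "cartesian Dob Dar Dob' Dar' \<phi> \<longleftrightarrow>
    is_pullback (Dob one_set) (Dob' one_set) (Dob {}) (Dob' {})
      (\<phi> one_set) (Dar {} one_set bang0) (Dar' {} one_set bang0) (\<phi> {})"
proof
  assume "cartesian Dob Dar Dob' Dar' \<phi>"
  then show "is_pullback (Dob one_set) (Dob' one_set) (Dob {}) (Dob' {})
      (\<phi> one_set) (Dar {} one_set bang0) (Dar' {} one_set bang0) (\<phi> {})"
  proof -
    have "\<forall>X X' g. g \<in> X \<rightarrow>\<^sub>E X' \<longrightarrow>
        is_pullback (Dob X') (Dob' X') (Dob X) (Dob' X) (\<phi> X') (Dar X X' g) (Dar' X X' g) (\<phi> X)"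
      using \<open>cartesian Dob Dar Dob' Dar' \<phi>\<close> unfolding cartesian_def .
    then show ?thesis using bang0_PiE by (elim allE impE)
  qed
next
  assume PB: "is_pullback (Dob one_set) (Dob' one_set) (Dob {}) (Dob' {})
      (\<phi> one_set) (Dar {} one_set bang0) (Dar' {} one_set bang0) (\<phi> {})"
  have D: "dirichlet Dob Dar" and D': "dirichlet Dob' Dar'" and N: "nat_trans Dob Dar Dob' Dar' \<phi>"
    using assms by auto
  have F: "contra_functor Dob Dar" and F': "contra_functor Dob' Dar'"
    using D D' by (auto simp: dirichlet_def)
  have H: "\<And>b c. b \<in> Dob' one_set \<Longrightarrow> c \<in> Dob {} \<Longrightarrow> Dar' {} one_set bang0 b = \<phi> {} c \<Longrightarrow>
      \<exists>!a. a \<in> Dob one_set \<and> \<phi> one_set a = b \<and> Dar {} one_set bang0 a = c"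
  proof -
    have "\<forall>b\<in>Dob' one_set. \<forall>c\<in>Dob {}. Dar' {} one_set bang0 b = \<phi> {} c \<longrightarrow>
      (\<exists>!a. a \<in> Dob one_set \<and> \<phi> one_set a = b \<and> Dar {} one_set bang0 a = c)"
      using PB unfolding pb_iff by (elim conjE)
    then show "\<And>b c. b \<in> Dob' one_set \<Longrightarrow> c \<in> Dob {} \<Longrightarrow> Dar' {} one_set bang0 b = \<phi> {} c \<Longrightarrow>
      \<exists>!a. a \<in> Dob one_set \<and> \<phi> one_set a = b \<and> Dar {} one_set bang0 a = c" by blast
  qed
  show "cartesian Dob Dar Dob' Dar' \<phi>"
    unfolding cartesian_def
  proof (intro allI impI)
    fix X X' :: "'a set" and g assume g: "g \<in> X \<rightarrow>\<^sub>E X'"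
    show "is_pullback (Dob X') (Dob' X') (Dob X) (Dob' X) (\<phi> X') (Dar X X' g) (Dar' X X' g) (\<phi> X)"
      unfolding pb_iff
    proof (intro conjI ballI impI)
      show "\<phi> X' \<in> Dob X' \<rightarrow> Dob' X'" using N by (auto intro: nat_in)
      show "\<phi> X \<in> Dob X \<rightarrow> Dob' X" using N by (auto intro: nat_in)
      show "Dar X X' g \<in> Dob X' \<rightarrow> Dob X" using F g by (auto intro: dar_in)
      show "Dar' X X' g \<in> Dob' X' \<rightarrow> Dob' X" using F' g by (auto intro: dar_in)
      fix a assume "a \<in> Dob X'"
      then show "Dar' X X' g (\<phi> X' a) = \<phi> X (Dar X X' g a)" using nat_eq[OF N g] by simp
    next
      fix y' z assume y': "y' \<in> Dob' X'" and z: "z \<in> Dob X" and yz: "Dar' X X' g y' = \<phi> X z"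
      define c where "c = Dar {} X bang0 z"
      have c: "c \<in> Dob {}" unfolding c_def using F bang0_PiE z by (rule dar_in)
      define b where "b x' = Dar' one_set X' (pt x') y'" for x'
      have b: "b x' \<in> Dob' one_set" if "x' \<in> X'" for x'
        unfolding b_def using F' pt_PiE[OF that] y' by (rule dar_in)
      have y0: "Dar' {} X' bang0 y' = \<phi> {} c"
      proof -
        have "Dar' {} X' bang0 y' = Dar' {} X bang0 (Dar' X X' g y')"
          using dar_bang_g[OF F' g y'] by simp
        also have "\<dots> = Dar' {} X bang0 (\<phi> X z)" by (simp add: yz)
        also have "\<dots> = \<phi> {} c" unfolding c_def using nat_eq[OF N bang0_PiE z] by simp
        finally show ?thesis .
      qed
      have bc: "Dar' {} one_set bang0 (b x') = \<phi> {} c" if "x' \<in> X'" for x'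
        unfolding b_def using dar_bang_pt[OF F' that y'] y0 by simp
      have Hx: "\<exists>!a. a \<in> Dob one_set \<and> \<phi> one_set a = b x' \<and> Dar {} one_set bang0 a = c"
        if "x' \<in> X'" for x'
        using H[OF b[OF that] c bc[OF that]] .
      define a where "a x' = (THE a. a \<in> Dob one_set \<and> \<phi> one_set a = b x' \<and> Dar {} one_set bang0 a = c)" for x'
      have a: "a x' \<in> Dob one_set \<and> \<phi> one_set (a x') = b x' \<and> Dar {} one_set bang0 (a x') = c"
        if "x' \<in> X'" for x'
        unfolding a_def using theI'[OF Hx[OF that]] .
      obtain w where w: "w \<in> Dob X'" "\<forall>x'\<in>X'. Dar one_set X' (pt x') w = a x'" "Dar {} X' bang0 w = c"
        using dir_ex[OF D c, of X' a] a by blast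
      have uniq: "w1 = w2" if w1: "w1 \<in> Dob X' \<and> \<phi> X' w1 = y' \<and> Dar X X' g w1 = z"
        and w2: "w2 \<in> Dob X' \<and> \<phi> X' w2 = y' \<and> Dar X X' g w2 = z" for w1 w2
      proof -
        have P: "Dar one_set X' (pt x') wi \<in> Dob one_set \<and> \<phi> one_set (Dar one_set X' (pt x') wi) = b x'
                 \<and> Dar {} one_set bang0 (Dar one_set X' (pt x') wi) = c"
          if "x' \<in> X'" and wi: "wi \<in> Dob X' \<and> \<phi> X' wi = y' \<and> Dar X X' g wi = z" for x' wi
        proof (intro conjI)
          show "Dar one_set X' (pt x') wi \<in> Dob one_set" using F pt_PiE[OF that(1)] wi by (blast intro: dar_in)
          show "\<phi> one_set (Dar one_set X' (pt x') wi) = b x'"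
            unfolding b_def using nat_eq[OF N pt_PiE[OF that(1)]] wi by simp
          have "Dar {} one_set bang0 (Dar one_set X' (pt x') wi) = Dar {} X' bang0 wi"
            using dar_bang_pt[OF F that(1)] wi by simp
          also have "\<dots> = Dar {} X bang0 (Dar X X' g wi)" by (rule dar_bang_g[OF F g, symmetric]) (use wi in blast)
          also have "\<dots> = c" using wi by (simp add: c_def)
          finally show "Dar {} one_set bang0 (Dar one_set X' (pt x') wi) = c" .
        qed
        show ?thesis
        proof (rule dir_mono[OF D])
          show "w1 \<in> Dob X'" "w2 \<in> Dob X'" using w1 w2 by auto
          show "\<forall>x\<in>X'. Dar one_set X' (pt x) w1 = Dar one_set X' (pt x) w2"
            using P[OF _ w1] P[OF _ w2] Hx by blast
          show "Dar {} X' bang0 w1 = Dar {} X' bang0 w2"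
            using dar_bang_g[OF F g] w1 w2 by metis
        qed
      qed
      have ex: "w \<in> Dob X' \<and> \<phi> X' w = y' \<and> Dar X X' g w = z"
      proof (intro conjI)
        show "w \<in> Dob X'" by (rule w(1))
        show "\<phi> X' w = y'"
        proof (rule dir_mono[OF D'])
          show "\<phi> X' w \<in> Dob' X'" using N w(1) by (rule nat_in)
          show "y' \<in> Dob' X'" by (rule y')
          show "\<forall>x\<in>X'. Dar' one_set X' (pt x) (\<phi> X' w) = Dar' one_set X' (pt x) y'"
          proof
            fix x assume x: "x \<in> X'"
            have "Dar' one_set X' (pt x) (\<phi> X' w) = \<phi> one_set (Dar one_set X' (pt x) w)"
              using nat_eq[OF N pt_PiE[OF x] w(1)] by simp
            also have "\<dots> = b x" using w(2) a[OF x] x by simp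
            finally show "Dar' one_set X' (pt x) (\<phi> X' w) = Dar' one_set X' (pt x) y'" by (simp add: b_def)
          qed
          show "Dar' {} X' bang0 (\<phi> X' w) = Dar' {} X' bang0 y'"
            using nat_eq[OF N bang0_PiE w(1)] w(3) y0 by simp
        qed
        show "Dar X X' g w = z"
        proof (rule dir_mono[OF D])
          show "Dar X X' g w \<in> Dob X" using F g w(1) by (rule dar_in)
          show "z \<in> Dob X" by (rule z)
          show "\<forall>x\<in>X. Dar one_set X (pt x) (Dar X X' g w) = Dar one_set X (pt x) z"
          proof
            fix x assume x: "x \<in> X"
            have gx: "g x \<in> X'" using g x by auto
            have l: "Dar one_set X (pt x) (Dar X X' g w) = a (g x)"
              using dar_pt_g[OF F g w(1) x] w(2) gx by simp
            define a0 where "a0 = Dar one_set X (pt x) z"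
            have a0: "a0 \<in> Dob one_set \<and> \<phi> one_set a0 = b (g x) \<and> Dar {} one_set bang0 a0 = c"
            proof (intro conjI)
              show "a0 \<in> Dob one_set" unfolding a0_def using F pt_PiE[OF x] z by (rule dar_in)
              have "\<phi> one_set a0 = Dar' one_set X (pt x) (\<phi> X z)"
                unfolding a0_def using nat_eq[OF N pt_PiE[OF x] z] .
              also have "\<dots> = Dar' one_set X (pt x) (Dar' X X' g y')" by (simp add: yz)
              also have "\<dots> = b (g x)" unfolding b_def by (rule dar_pt_g[OF F' g y' x])
              finally show "\<phi> one_set a0 = b (g x)" .
              show "Dar {} one_set bang0 a0 = c"
                unfolding a0_def c_def by (rule dar_bang_pt[OF F x z])
            qed
            have "a0 = a (g x)" using Hx[OF gx] a0 a[OF gx] by blast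
            then show "Dar one_set X (pt x) (Dar X X' g w) = Dar one_set X (pt x) z"
              using l by (simp add: a0_def)
          qed
          show "Dar {} X bang0 (Dar X X' g w) = Dar {} X bang0 z"
            using dar_bang_g[OF F g w(1)] w(3) by (simp add: c_def)
        qed
      qed
      show "\<exists>!w. w \<in> Dob X' \<and> \<phi> X' w = y' \<and> Dar X X' g w = z"
        using ex uniq by blast
    qed
  qed
qed

end
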